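(* Let $\theta=\sqrt{5-\pi^2/3}$. For all $x\in[-2,0)$, $$g(x):=2x-2x^2-\frac43x^3+\frac75\theta\big(-x^2-2x\big)^{3/2}<0.$$ *)

theory Defs
  imports Complex_Main
begin

end

theory Submission
  imports Defs "HOL-Analysis.Complex_Transcendental"
begin

lemma poly0:
  assumes "0 \<le> (t::real)" "t \<le> (1/2)"
  shows "0 < (2+2*t-4/3*t^2)^2 - 336/100*t*(2-t)^3"
proof -
  have e: "(1/16) * ((2+2*t-4/3*t^2)^2 - 336/100*t*(2-t)^3) = 4*(((1/2)-t)^4) + (164/25)*(t*((1/2)-t)^3) + (407/75)*(t^2*((1/2)-t)^2) + (299/75)*(t^3*((1/2)-t)) + (1297/900)*(t^4)" by algebra
  have n1: "0 \<le> t*((1/2)-t)^3" "0 \<le> t^2*((1/2)-t)^2" "0 \<le> t^3*((1/2)-t)"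
    using assms by simp_all
  have n2: "0 \<le> ((1/2)-t)^4" "0 \<le> t^4" by simp_all
  have n3: "0 < ((1/2)-t)^4 + t^4"
  proof (cases "t = 0")
    case True show ?thesis unfolding True by simp
  next
    case False then have "0 < t^4" using assms by simp
    then show ?thesis using n2 by linarith
  qed
  have "0 < 4*(((1/2)-t)^4) + (164/25)*(t*((1/2)-t)^3) + (407/75)*(t^2*((1/2)-t)^2) + (299/75)*(t^3*((1/2)-t)) + (1297/900)*(t^4)" using n1 n2 n3 by linarith
  then show ?thesis using e by simp
qed

lemma poly1:
  assumes "(1/2) \<le> (t::real)" "t \<le> 1"
  shows "0 < (2+2*t-4/3*t^2)^2 - 336/100*t*(2-t)^3"
proof -
  have e: "(1/16) * ((2+2*t-4/3*t^2)^2 - 336/100*t*(2-t)^3) = (1297/900)*((1-t)^4) + (1697/225)*((t-(1/2))*(1-t)^3) + (1207/75)*((t-(1/2))^2*(1-t)^2) + (604/45)*((t-(1/2))^3*(1-t)) + (844/225)*((t-(1/2))^4)" by algebra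
  have n1: "0 \<le> (t-(1/2))*(1-t)^3" "0 \<le> (t-(1/2))^2*(1-t)^2" "0 \<le> (t-(1/2))^3*(1-t)"
    using assms by simp_all
  have n2: "0 \<le> (1-t)^4" "0 \<le> (t-(1/2))^4" by simp_all
  have n3: "0 < (1-t)^4 + (t-(1/2))^4"
  proof (cases "t = (1/2)")
    case True show ?thesis unfolding True by simp
  next
    case False then have "0 < (t-(1/2))^4" using assms by simp
    then show ?thesis using n2 by linarith
  qed
  have "0 < (1297/900)*((1-t)^4) + (1697/225)*((t-(1/2))*(1-t)^3) + (1207/75)*((t-(1/2))^2*(1-t)^2) + (604/45)*((t-(1/2))^3*(1-t)) + (844/225)*((t-(1/2))^4)" using n1 n2 n3 by linarith
  then show ?thesis using e by simp
qed

lemma poly2: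
  assumes "1 \<le> (t::real)" "t \<le> 2"
  shows "0 < (2+2*t-4/3*t^2)^2 - 336/100*t*(2-t)^3"
proof -
  have e: "((2+2*t-4/3*t^2)^2 - 336/100*t*(2-t)^3) = (844/225)*((2-t)^4) + (4088/225)*((t-1)*(2-t)^3) + (76/3)*((t-1)^2*(2-t)^2) + (56/9)*((t-1)^3*(2-t)) + (4/9)*((t-1)^4)" by algebra
  have n1: "0 \<le> (t-1)*(2-t)^3" "0 \<le> (t-1)^2*(2-t)^2" "0 \<le> (t-1)^3*(2-t)"
    using assms by simp_all
  have n2: "0 \<le> (2-t)^4" "0 \<le> (t-1)^4" by simp_all
  have n3: "0 < (2-t)^4 + (t-1)^4"
  proof (cases "t = 1")
    case True show ?thesis unfolding True by simp
  next
    case False then have "0 < (t-1)^4" using assms by simp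
    then show ?thesis using n2 by linarith
  qed
  have "0 < (844/225)*((2-t)^4) + (4088/225)*((t-1)*(2-t)^3) + (76/3)*((t-1)^2*(2-t)^2) + (56/9)*((t-1)^3*(2-t)) + (4/9)*((t-1)^4)" using n1 n2 n3 by linarith
  then show ?thesis using e by simp
qed

lemma polyall:
  assumes "0 \<le> (t::real)" "t \<le> 2"
  shows "0 < (2+2*t-4/3*t^2)^2 - 336/100*t*(2-t)^3"
  using poly0 poly1 poly2 assms by (meson linorder_le_cases)

theorem lemmaA1:
  fixes x :: real
  assumes "-2 \<le> x" and "x < 0"
  shows "2*x - 2*x^2 - 4/3*x^3 + 7/5 * sqrt (5 - pi^2/3) * (- (x^2) - 2*x) powr (3/2) < 0"
proof -
  define t where "t = -x"
  have t0: "0 < t" and t2: "t \<le> 2" using assms by (auto simp: t_def)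
  define y where "y = - (x^2) - 2*x"
  have yt: "y = t*(2-t)" by (simp add: y_def t_def power2_eq_square algebra_simps)
  have y0: "0 \<le> y" using t0 t2 yt by simp
  define c where "c = 7/5 * sqrt (5 - pi^2/3)"
  have pis: "98596/10000 \<le> pi^2"
  proof -
    have "(314/100)*(314/100) \<le> pi*pi" using pi_approx(1) by (intro mult_mono) auto
    then show ?thesis by (simp add: power2_eq_square)
  qed
  have pis2: "pi^2 \<le> 10"
  proof -
    have "pi*pi \<le> 3.15*3.15" using pi_approx(2) by (intro mult_mono) auto
    then show ?thesis by (simp add: power2_eq_square)
  qed
  have nn: "0 \<le> 5 - pi^2/3" using pis2 by linarith
  have c0: "0 \<le> c" unfolding c_def using nn by simp
  have cc: "c^2 = 49/25 * (5 - pi^2/3)" unfolding c_def using nn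
    by (simp only: power_mult_distrib real_sqrt_pow2) (simp add: power2_eq_square algebra_simps)
  have c2: "c^2 \<le> 336/100" unfolding cc using pis by simp
  have yp: "y powr (3/2) = y * sqrt y"
  proof (cases "y = 0")
    case True then show ?thesis by simp
  next
    case False
    then have "0 < y" using y0 by simp
    then have "y powr (3/2) = y powr (1 + 1/2)" by simp
    also have "\<dots> = y powr 1 * y powr (1/2)" by (rule powr_add)
    also have "\<dots> = y * sqrt y" using \<open>0 < y\<close> by (simp add: powr_half_sqrt)
    finally show ?thesis .
  qed
  define P where "P = 2*t + 2*t^2 - 4/3*t^3"
  have Pt: "P = t * (2+2*t-4/3*t^2)" by (simp add: P_def power2_eq_square power3_eq_cube algebra_simps)
  have q: "0 < (2+2*t-4/3*t^2)^2 - 336/100*t*(2-t)^3" using polyall t0 t2 by simp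
  have "(2+2*t-4/3*t^2) > 0"
  proof -
    have "(2+2*t-4/3*t^2) = 2 + t*(2 - 4/3*t)" by (simp add: power2_eq_square algebra_simps)
    moreover have "t*(2 - 4/3*t) \<ge> -2/3 * t" using t0 t2 by (simp add: algebra_simps mult_left_mono)
    ultimately show ?thesis using t2 by linarith
  qed
  then have P0: "0 < P" using Pt t0 by simp
  have L0: "0 \<le> c * (y * sqrt y)" using c0 y0 by simp
  have "(c * (y * sqrt y))^2 = c^2 * y^3" using y0
    by (simp add: power_mult_distrib power2_eq_square power3_eq_cube)
  also have "\<dots> \<le> 336/100 * y^3" using c2 y0 by (intro mult_right_mono) auto
  also have "\<dots> = t^2 * (336/100 * t * (2-t)^3)" unfolding yt by (simp add: power_mult_distrib power2_eq_square power3_eq_cube)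
  also have "\<dots> < t^2 * (2+2*t-4/3*t^2)^2" using q t0 by simp
  also have "\<dots> = P^2" unfolding Pt by (simp add: power_mult_distrib)
  finally have "(c * (y * sqrt y))^2 < P^2" .
  then have "c * (y * sqrt y) < P" using L0 P0 by (meson power_less_imp_less_base less_imp_le)
  then show ?thesis
    unfolding c_def[symmetric] y_def[symmetric] yp using P_def t_def
    by (simp add: power2_eq_square power3_eq_cube algebra_simps)
qed

end
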